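(* Let $n\in\mathbb{N}$, let $a\ge2$ be an integer, $k_1,\ldots,k_n\in\mathbb{N}$, $K=\operatorname{lcm}(k_1,\ldots,k_n)$, and put $P(j)=\prod_{i=1}^n\bigl(\sum_{d_i|k_i,\ d_i^a|j}\phi(d_i)\bigr)$ for $j\in\mathbb{N}_0$. For each tuple $d_1|k_1,\ldots,d_n|k_n$ write $M=\operatorname{lcm}(d_1,\ldots,d_n)$ and $L=K/M$. Then $$\sum_{j=1}^{K^a}\log\Gamma\Bigl(\frac{j}{K^a}\Bigr)P(j)=\frac{K^a}{2}\log(2\pi)\sum_{d_1|k_1,\ldots,d_n|k_n}\frac{\prod_i\phi(d_i)}{M^a}-\frac{k_1\cdots k_n}{2}\log(2\pi K^a)+\frac a2\sum_{d_1|k_1,\ldots,d_n|k_n}(\log M)\prod_i\phi(d_i),$$ $$\sum_{j=0}^{K^a}\binom{K^a}{j}P(j)=2^{K^a}\sum_{d_1|k_1,\ldots,d_n|k_n}\frac{\phi(d_1)\cdots\phi(d_n)}{M^a}\sum_{\ell=1}^{M^a}(-1)^{\ell L^a}\cos^{K^a}\Bigl(\frac{\pi\ell}{M^a}\Bigr),$$ for every integer $m\ge0$, $$\sum_{j=0}^{K^a-1}B_m\Bigl(\frac{j}{K^a}\Bigr)P(j)=\frac{B_m}{K^{a(m-1)}}\sum_{d_1|k_1,\ldots,d_n|k_n}M^{a(m-1)}\phi(d_1)\cdots\phi(d_n),$$ and in particular $\sum_{j=0}^{K^a-1}B_1\bigl(\frac{j}{K^a}\bigr)P(j)=-\frac{k_1\cdots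 k_n}{2}$.
   Context: $\phi$ is Euler's totient function; for $j=0$ every $d^a$ divides $j$. $\Gamma$ is the Gamma function. The Bernoulli polynomials are defined by $\frac{te^{xt}}{e^t-1}=\sum_{m\ge0}B_m(x)\frac{t^m}{m!}$ and $B_m=B_m(0)$ (so $B_1=-1/2$). *)

theory Defs
  imports "HOL-Analysis.Analysis" "HOL-Computational_Algebra.Formal_Power_Series" "HOL-Number_Theory.Number_Theory"
begin

definition bernpoly :: "nat \<Rightarrow> real \<Rightarrow> real" where
  "bernpoly m x = fact m * fps_nth (fps_X * fps_exp x / (fps_exp 1 - 1)) m"

text \<open>Bernoulli numbers B_m = B_m(0) (so B_1 = -1/2).\<close>
definition bernoulli :: "nat \<Rightarrow> real" where
  "bernoulli m = bernpoly m 0"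

definition divtuples :: "nat \<Rightarrow> (nat \<Rightarrow> nat) \<Rightarrow> (nat \<Rightarrow> nat) set" where
  "divtuples n k = PiE {1..n} (\<lambda>i. {d. d dvd k i})"

definition Pfun :: "nat \<Rightarrow> nat \<Rightarrow> (nat \<Rightarrow> nat) \<Rightarrow> nat \<Rightarrow> nat" where
  "Pfun n a k j = (\<Prod>i=1..n. \<Sum>d\<in>{d. d dvd k i \<and> d ^ a dvd j}. totient d)"

end

theory Submission imports Defs "HOL-Computational_Algebra.Fundamental_Theorem_Algebra" begin


definition GG :: "real \<Rightarrow> real fps" where "GG x = fps_X * fps_exp x / (fps_exp 1 - 1)"

lemma subdeg_E1: "subdegree (fps_exp (1::real) - 1) = 1"
  by (rule subdegreeI) auto
lemma subdeg_XE: "subdegree (fps_X * fps_exp (x::real)) = 1"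
  by (simp add: subdegree_mult)
lemma E1_ne: "fps_exp (1::real) - 1 \<noteq> 0" by simp

lemma GG_eq: "GG x * (fps_exp 1 - 1) = fps_X * fps_exp (x::real)"
proof -
  have "subdegree (fps_exp (1::real) - 1) \<le> subdegree (fps_X * fps_exp x)"
    by (simp only: subdeg_E1 subdeg_XE)
  hence "fps_exp (1::real) - 1 dvd fps_X * fps_exp x"
    using E1_ne by (subst fps_dvd_iff) auto
  thus ?thesis unfolding GG_def by simp
qed

lemma bernpoly_GG: "bernpoly m x = fact m * fps_nth (GG x) m"
  by (simp add: bernpoly_def GG_def)

lemma sumGG:
  assumes q: "q > 0"
  shows "(\<Sum>l<q. GG (real l / real q)) = fps_const (real q) * (GG 0 oo (fps_const (1 / real q) * fps_X))"
proof -
  define E where "E = (fps_exp :: real \<Rightarrow> real fps)"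
  define y where "y = E (1 / real q)"
  define S where "S = (\<Sum>l<q. GG (real l / real q))"
  define R where "R = fps_const (real q) * (GG 0 oo (fps_const (1 / real q) * fps_X))"
  have yl: "E (real l / real q) = y ^ l" for l
    by (simp add: y_def E_def fps_exp_power_mult)
  have yq: "y ^ q = E 1" using q by (simp add: y_def E_def fps_exp_power_mult)
  have "S * (E 1 - 1) = fps_X * (\<Sum>l<q. y ^ l)"
    unfolding S_def sum_distrib_right sum_distrib_left
    by (intro sum.cong refl) (simp add: GG_eq E_def yl[unfolded E_def])
  hence "S * (E 1 - 1) * (y - 1) = fps_X * (y ^ q - 1)"
    by (simp add: power_diff_1_eq mult.assoc mult.commute mult.left_commute)
  hence "(S * (y - 1)) * (E 1 - 1) = fps_X * (E 1 - 1)"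
    by (simp add: yq mult_ac)
  hence S1: "S * (y - 1) = fps_X"
    using E1_ne unfolding E_def by simp
  have c0: "fps_nth (fps_const (1 / real q) * fps_X) 0 = 0" by simp
  have "(GG 0 oo (fps_const (1 / real q) * fps_X)) * (y - 1)
      = (GG 0 oo (fps_const (1 / real q) * fps_X)) * ((E 1 - 1) oo (fps_const (1 / real q) * fps_X))"
    by (simp add: y_def E_def fps_compose_sub_distrib)
  also have "\<dots> = (GG 0 * (E 1 - 1)) oo (fps_const (1 / real q) * fps_X)"
    by (rule fps_compose_mult_distrib[OF c0, symmetric])
  also have "\<dots> = fps_const (1 / real q) * fps_X"
    by (simp add: GG_eq E_def)
  finally have "R * (y - 1) = fps_const (real q) * (fps_const (1 / real q) * fps_X)"
    unfolding R_def by (simp add: mult.assoc)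
  also have "\<dots> = fps_X" using q by (simp add: mult.assoc[symmetric] fps_const_mult[symmetric])
  finally have R1: "R * (y - 1) = fps_X" .
  have "y \<noteq> 1" using q by (simp add: y_def E_def)
  hence "y - 1 \<noteq> 0" by simp
  with S1 R1 have "S = R" by (metis mult_right_cancel)
  thus ?thesis by (simp add: S_def R_def)
qed

lemma bernpoly_mult:
  assumes q: "q > 0"
  shows "(\<Sum>l<q. bernpoly m (real l / real q)) = real q * (1 / real q) ^ m * bernoulli m"
proof -
  have "(\<Sum>l<q. bernpoly m (real l / real q)) = fact m * fps_nth (\<Sum>l<q. GG (real l / real q)) m"
    by (simp add: bernpoly_GG sum_distrib_left fps_sum_nth)
  also have "\<dots> = fact m * (real q * ((1 / real q) ^ m * fps_nth (GG 0) m))"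
    using q by (simp add: sumGG fps_compose_linear)
  also have "\<dots> = real q * (1 / real q) ^ m * bernoulli m"
    by (simp add: bernoulli_def bernpoly_GG)
  finally show ?thesis .
qed

lemma bernoulli_1: "bernoulli 1 = - 1/2"
proof -
  have e: "GG 0 * (fps_exp 1 - 1) = fps_X" using GG_eq[of 0] by simp
  have e1: "fps_nth (GG 0 * (fps_exp 1 - 1)) 1 = 1" and e2: "fps_nth (GG 0 * (fps_exp 1 - 1)) 2 = 0"
    by (simp_all add: e)
  have "fps_nth (GG 0 * (fps_exp 1 - 1)) 1 = fps_nth (GG 0) 0"
    by (simp add: fps_mult_nth)
  moreover have "fps_nth (GG 0 * (fps_exp 1 - 1)) 2 = fps_nth (GG 0) 0 / 2 + fps_nth (GG 0) 1"
    by (simp add: fps_mult_nth numeral_2_eq_2)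
  ultimately have "fps_nth (GG 0) 1 = - 1/2" using e1 e2 by simp
  thus ?thesis by (simp add: bernoulli_def bernpoly_GG)
qed


lemma roots_prod_one:
  assumes q: "q \<ge> (1::nat)"
  shows "(\<Prod>z\<in>{z::complex. z ^ q = 1} - {1}. 1 - z) = of_nat q"
proof -
  define p :: "complex poly" where "p = Polynomial.monom 1 q + [:-1:]"
  have polyp: "poly p x = x ^ q - 1" for x by (simp add: p_def poly_monom)
  have lc: "lead_coeff p = 1"
  proof -
    have "degree p = q"
      using q by (simp add: p_def degree_add_eq_left degree_monom_eq)
    moreover have "poly.coeff [:-1::complex:] q = 0" using q by (cases q) auto
    ultimately show ?thesis using q by (simp add: p_def coeff_monom)
  qed
  have pd: "poly (pderiv p) x = of_nat q * x ^ (q - 1)" for x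
    by (simp add: p_def pderiv_add pderiv_pCons pderiv_monom poly_monom)
  have rsq: "rsquarefree p"
    unfolding rsquarefree_roots
  proof (intro allI notI)
    fix a assume "poly p a = 0 \<and> poly (pderiv p) a = 0"
    hence "a ^ q = 1" "of_nat q * a ^ (q - 1) = 0" by (auto simp: polyp pd)
    thus False using q by (cases "a = 0") (auto simp: power_0_left)
  qed
  have rootsp: "{z. poly p z = 0} = {z::complex. z ^ q = 1}" by (auto simp: polyp)
  have fin: "finite {z::complex. z ^ q = 1}" using q by (intro finite_roots_unity) auto
  have one_in: "(1::complex) \<in> {z. z ^ q = 1}" by simp
  have "p = (\<Prod>z\<in>{z::complex. z ^ q = 1}. [:-z, 1:])"
    using complex_poly_decompose_rsquarefree[OF rsq] by (simp add: lc rootsp)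
  also have "\<dots> = [:-1, 1:] * (\<Prod>z\<in>{z::complex. z ^ q = 1} - {1}. [:-z, 1:])"
    by (rule prod.remove[OF fin one_in])
  finally have e1: "p = [:-1, 1:] * (\<Prod>z\<in>{z::complex. z ^ q = 1} - {1}. [:-z, 1:])" .
  have e2: "p = [:-1, 1:] * (\<Sum>i<q. Polynomial.monom 1 i)"
  proof -
    have "poly p = poly ([:-1, 1:] * (\<Sum>i<q. Polynomial.monom (1::complex) i))"
      by (rule ext) (simp add: polyp poly_sum poly_monom power_diff_1_eq left_diff_distrib)
    thus ?thesis by (simp add: poly_eq_poly_eq_iff)
  qed
  have ne: "[:-1, 1::complex:] \<noteq> 0" by simp
  have "[:-1, 1:] * (\<Sum>i<q. Polynomial.monom (1::complex) i) = [:-1, 1:] * (\<Prod>z\<in>{z::complex. z ^ q = 1} - {1}. [:-z, 1:])"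
    using e2 e1 by (rule trans[OF sym])
  hence "(\<Sum>i<q. Polynomial.monom (1::complex) i) = (\<Prod>z\<in>{z::complex. z ^ q = 1} - {1}. [:-z, 1:])"
    using ne by (metis mult_left_cancel)
  hence "poly (\<Sum>i<q. Polynomial.monom (1::complex) i) 1 = poly (\<Prod>z\<in>{z::complex. z ^ q = 1} - {1}. [:-z, 1:]) 1"
    by simp
  thus ?thesis by (simp add: poly_sum poly_monom poly_prod)
qed

lemma norm_one_minus_cis:
  assumes "0 \<le> t" "t \<le> 2 * pi"
  shows "norm (1 - cis t) = 2 * sin (t / 2)"
proof -
  have s: "sin (t / 2) \<ge> 0" using assms by (intro sin_ge_zero) auto
  have "(norm (1 - cis t))^2 = (1 - cos t)^2 + (sin t)^2"
    by (simp add: cmod_def)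
  also have "\<dots> = 2 - 2 * cos t" using sin_cos_squared_add[of t]
    by (simp add: power2_eq_square algebra_simps)
  also have "cos t = 1 - 2 * (sin (t/2))^2"
    using cos_double_sin[of "t/2"] by simp
  finally have "(norm (1 - cis t))^2 = (2 * sin (t / 2))^2"
    by (simp add: power2_eq_square)
  thus ?thesis using s
    by (metis norm_ge_zero power2_eq_imp_eq mult_nonneg_nonneg zero_le_numeral)
qed

lemma sin_prod:
  assumes q: "q \<ge> (1::nat)"
  shows "(\<Prod>k=1..<q. 2 * sin (pi * real k / real q)) = real q"
proof -
  define f where "f k = cis (2 * pi * real k / real q)" for k
  have bij: "bij_betw f {..<q} {z. z ^ q = 1}"
    unfolding f_def by (rule Complex.bij_betw_roots_unity) (use q in auto)
  have f0: "f 0 = 1" by (simp add: f_def)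
  have bij2: "bij_betw f {1..<q} ({z. z ^ q = 1} - {1})"
  proof -
    have "{1..<q} = {..<q} - {0}" by auto
    moreover have "bij_betw f ({..<q} - {0}) ({z. z ^ q = 1} - {f 0})"
      using q by (intro bij_betw_DiffI bij) (auto simp: bij_betw_def f0)
    ultimately show ?thesis by (simp add: f0)
  qed
  have "(\<Prod>k=1..<q. 1 - f k) = of_nat q"
    using roots_prod_one[OF q] prod.reindex_bij_betw[OF bij2, of "\<lambda>z. 1 - z"] by simp
  hence "norm (\<Prod>k=1..<q. 1 - f k) = real q" by simp
  hence "(\<Prod>k=1..<q. norm (1 - f k)) = real q" by (simp add: prod_norm)
  moreover have "norm (1 - f k) = 2 * sin (pi * real k / real q)" if "k \<in> {1..<q}" for k
  proof -
    have "0 \<le> 2 * pi * real k / real q" by simp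
    moreover have "2 * pi * real k / real q \<le> 2 * pi" using that q by (simp add: field_simps)
    ultimately show ?thesis unfolding f_def by (subst norm_one_minus_cis) auto
  qed
  ultimately show ?thesis by (metis (no_types, lifting) prod.cong)
qed

lemma Gamma_reflection_real:
  assumes "0 < x" "x < (1::real)"
  shows "Gamma x * Gamma (1 - x) = pi / sin (pi * x)"
proof -
  have "Gamma (complex_of_real x) * Gamma (1 - complex_of_real x) = of_real pi / sin (of_real pi * of_real x)"
    by (rule Gamma_reflection_complex)
  also have "1 - complex_of_real x = of_real (1 - x)" by simp
  also have "sin (of_real pi * of_real x) = complex_of_real (sin (pi * x))"
    by (simp flip: of_real_mult add: sin_of_real)
  finally have "complex_of_real (Gamma x * Gamma (1 - x)) = complex_of_real (pi / sin (pi * x))"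
    by (simp only: Gamma_complex_of_real of_real_mult of_real_divide)
  thus ?thesis by (simp only: of_real_eq_iff)
qed

lemma ln_Gamma_mult:
  assumes q: "q \<ge> (1::nat)"
  shows "(\<Sum>l=1..q. ln (Gamma (real l / real q))) = (real q - 1) / 2 * ln (2 * pi) - ln (real q) / 2"
proof -
  have sinpos: "sin (pi * real l / real q) > 0" if "l \<in> {1..<q}" for l
    using that by (intro sin_gt_zero) (auto simp: field_simps)
  have "(\<Prod>l=1..<q. Gamma (real l / real q)) = (\<Prod>l=1..<q. Gamma (real (q + 1 - Suc l) / real q))"
    by (rule prod.atLeastLessThan_rev)
  also have "\<dots> = (\<Prod>l=1..<q. Gamma (1 - real l / real q))"
    using q by (intro prod.cong refl) (auto simp: of_nat_diff field_simps)
  finally have rev: "(\<Prod>l=1..<q. Gamma (real l / real q)) = (\<Prod>l=1..<q. Gamma (1 - real l / real q))" .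
  have "(\<Prod>l=1..<q. Gamma (real l / real q) ^ 2) = (\<Prod>l=1..<q. Gamma (real l / real q)) * (\<Prod>l=1..<q. Gamma (1 - real l / real q))"
    by (simp only: power2_eq_square prod.distrib rev[symmetric])
  also have "\<dots> = (\<Prod>l=1..<q. Gamma (real l / real q) * Gamma (1 - real l / real q))"
    by (simp add: prod.distrib)
  also have "\<dots> = (\<Prod>l=1..<q. 2 * pi / (2 * sin (pi * real l / real q)))"
    by (intro prod.cong refl, subst Gamma_reflection_real) (auto simp: field_simps)
  also have "\<dots> = (\<Prod>l=1..<q. 2 * pi) / (\<Prod>l=1..<q. 2 * sin (pi * real l / real q))"
    by (rule prod_dividef)
  also have "\<dots> = (2 * pi) ^ (q - 1) / real q"
    by (simp only: sin_prod[OF q]) simp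
  finally have pr: "(\<Prod>l=1..<q. Gamma (real l / real q) ^ 2) = (2 * pi) ^ (q - 1) / real q" .
  have gp: "Gamma (real l / real q) > 0" if "l \<in> {1..<q}" for l
    using that by (intro Gamma_real_pos) auto
  have "2 * (\<Sum>l=1..<q. ln (Gamma (real l / real q))) = (\<Sum>l=1..<q. ln (Gamma (real l / real q) ^ 2))"
    by (simp add: sum_distrib_left ln_realpow gp)
  also have "\<dots> = ln (\<Prod>l=1..<q. Gamma (real l / real q) ^ 2)"
    by (rule ln_prod[symmetric]) (use gp in \<open>force simp: less_imp_neq[symmetric]\<close>)+
  also have "\<dots> = ln ((2 * pi) ^ (q - 1) / real q)" by (simp only: pr)
  also have "\<dots> = ln ((2 * pi) ^ (q - 1)) - ln (real q)"
    by (rule ln_divide_pos) (use q in auto)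
  also have "\<dots> = real (q - 1) * ln (2 * pi) - ln (real q)"
    by (subst ln_realpow) auto
  also have "real (q - 1) = real q - 1" using q by (simp add: of_nat_diff)
  finally have "(\<Sum>l=1..<q. ln (Gamma (real l / real q))) = (real q - 1) / 2 * ln (2 * pi) - ln (real q) / 2"
    by simp
  moreover have "{1..q} = insert q {1..<q}" using q by auto
  hence "(\<Sum>l=1..q. ln (Gamma (real l / real q))) = (\<Sum>l=1..<q. ln (Gamma (real l / real q))) + ln (Gamma (real q / real q))"
    by simp
  moreover have "ln (Gamma (real q / real q)) = 0" using q by simp
  ultimately show ?thesis by simp
qed


lemma roots_filter:
  assumes m: "m \<ge> (1::nat)"
  shows "(\<Sum>l=1..m. cis (2 * pi * real l * real j / real m)) = (if m dvd j then of_nat m else 0)"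
proof -
  define z where "z = cis (2 * pi * real j / real m)"
  have zl: "cis (2 * pi * real l * real j / real m) = z ^ l" for l
  proof -
    have "z ^ l = cis (real l * (2 * pi * real j / real m))" unfolding z_def by (rule Complex.DeMoivre)
    also have "real l * (2 * pi * real j / real m) = 2 * pi * real l * real j / real m" by simp
    finally show ?thesis by simp
  qed
  have zm: "z ^ m = 1"
  proof -
    have "z ^ m = cis (2 * pi * real j)" using m by (simp add: z_def Complex.DeMoivre)
    also have "\<dots> = cis (2 * real j * pi)" by (simp add: mult_ac)
    also have "\<dots> = 1" by (simp add: complex_eq_iff)
    finally show ?thesis .
  qed
  have s1: "(\<Sum>l=1..m. z ^ l) = z * (\<Sum>l<m. z ^ l)"
  proof -
    have "(\<Sum>l=1..m. z ^ l) = (\<Sum>l<m. z ^ Suc l)"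
      by (rule sum.reindex_bij_witness[where i = Suc and j = "\<lambda>l. l - 1"]) auto
    thus ?thesis by (simp add: sum_distrib_left)
  qed
  show ?thesis
  proof (cases "m dvd j")
    case True
    then obtain t where t: "j = m * t" by blast
    have "z = cis (2 * real t * pi)" using m by (simp add: z_def t mult_ac)
    also have "\<dots> = 1" by (simp add: complex_eq_iff)
    finally have "z = 1" .
    thus ?thesis by (simp add: zl True)
  next
    case False
    have "z \<noteq> 1"
    proof
      assume "z = 1"
      hence "cos (2 * pi * real j / real m) = 1" by (simp add: z_def complex_eq_iff)
      then obtain k :: int where k: "2 * pi * real j / real m = real_of_int k * 2 * pi"
        by (auto simp: cos_one_2pi_int)
      hence "real j = real m * real_of_int k" using m by (simp add: field_simps)
      hence "int j = int m * k" by (metis of_int_eq_iff of_int_mult of_int_of_nat_eq)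
      hence "int m dvd int j" by simp
      with False show False by simp
    qed
    have "(z - 1) * (\<Sum>l<m. z ^ l) = 0" using zm by (simp add: power_diff_1_eq[symmetric])
    with \<open>z \<noteq> 1\<close> have "(\<Sum>l<m. z ^ l) = 0" by simp
    hence "(\<Sum>l=1..m. z ^ l) = 0" by (simp only: s1) simp
    thus ?thesis by (simp only: zl False if_False)
  qed
qed

lemma one_plus_cis: "1 + cis t = complex_of_real (2 * cos (t / 2)) * cis (t / 2)"
proof -
  have c: "cos t = 2 * (cos (t/2))^2 - 1" using cos_double_cos[of "t/2"] by simp
  have s: "sin t = 2 * sin (t/2) * cos (t/2)" using sin_double[of "t/2"] by simp
  show ?thesis by (simp add: complex_eq_iff c s power2_eq_square)
qed

lemma binom_filter:
  assumes m: "m \<ge> (1::nat)" and N: "N = m * q"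
  shows "(\<Sum>j=0..N. real (N choose j) * (if m dvd j then 1 else 0)) =
         2 ^ N / real m * (\<Sum>l=1..m. (-1) ^ (l * q) * cos (pi * real l / real m) ^ N)"
proof -
  have "complex_of_real (real m * (\<Sum>j=0..N. real (N choose j) * (if m dvd j then 1 else 0)))
      = (\<Sum>j=0..N. of_nat (N choose j) * (if m dvd j then of_nat m else 0))"
    by (simp add: sum_distrib_left mult_ac if_distrib cong: if_cong)
  also have "\<dots> = (\<Sum>j=0..N. of_nat (N choose j) * (\<Sum>l=1..m. cis (2 * pi * real l * real j / real m)))"
    by (simp only: roots_filter[OF m])
  also have "\<dots> = (\<Sum>l=1..m. \<Sum>j=0..N. of_nat (N choose j) * cis (2 * pi * real l / real m) ^ j * 1 ^ (N - j))"
  proof -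
    have e: "cis (2 * pi * real l * real j / real m) = cis (2 * pi * real l / real m) ^ j" for l j
    proof -
      have "cis (2 * pi * real l / real m) ^ j = cis (real j * (2 * pi * real l / real m))" by (rule Complex.DeMoivre)
      also have "real j * (2 * pi * real l / real m) = 2 * pi * real l * real j / real m" by simp
      finally show ?thesis by simp
    qed
    show ?thesis by (simp only: e sum_distrib_left power_one mult_1_right) (rule sum.swap)
  qed
  also have "\<dots> = (\<Sum>l=1..m. (cis (2 * pi * real l / real m) + 1) ^ N)"
    by (simp add: binomial_ring atLeast0AtMost)
  also have "\<dots> = (\<Sum>l=1..m. complex_of_real ((-1) ^ (l * q) * (2 * cos (pi * real l / real m)) ^ N))"
  proof (intro sum.cong refl)
    fix l assume "l \<in> {1..m}"
    have "(cis (2 * pi * real l / real m) + 1) ^ N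
        = (complex_of_real (2 * cos (pi * real l / real m)) * cis (pi * real l / real m)) ^ N"
      using one_plus_cis[of "2 * pi * real l / real m"] by (simp add: add.commute)
    also have "\<dots> = complex_of_real ((2 * cos (pi * real l / real m)) ^ N) * cis (real N * (pi * real l / real m))"
      by (simp add: power_mult_distrib Complex.DeMoivre)
    also have "real N * (pi * real l / real m) = real (l * q) * pi"
      using m by (simp add: N field_simps)
    also have "cis (real (l * q) * pi) = (-1) ^ (l * q)"
      using cos_npi[of "l * q"] sin_npi[of "l * q"] by (simp add: complex_eq_iff del: of_nat_mult cos_npi sin_npi)
    finally show "(cis (2 * pi * real l / real m) + 1) ^ N =
        complex_of_real ((-1) ^ (l * q) * (2 * cos (pi * real l / real m)) ^ N)" by simp
  qed
  also have "\<dots> = complex_of_real (2 ^ N * (\<Sum>l=1..m. (-1) ^ (l * q) * cos (pi * real l / real m) ^ N))"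
    by (simp add: sum_distrib_left power_mult_distrib mult_ac)
  finally have "real m * (\<Sum>j=0..N. real (N choose j) * (if m dvd j then 1 else 0))
       = 2 ^ N * (\<Sum>l=1..m. (-1) ^ (l * q) * cos (pi * real l / real m) ^ N)"
    by (simp only: of_real_eq_iff)
  thus ?thesis using m by (simp add: field_simps)
qed


lemma lcm_pow_nat: "lcm (x ^ a) (y ^ a) = (lcm x y) ^ a" for x y :: nat
proof (cases "gcd x y = 0")
  case True
  hence "x = 0" "y = 0" by auto
  thus ?thesis by (cases a) auto
next
  case False
  have "gcd (x ^ a) (y ^ a) * lcm (x ^ a) (y ^ a) = x ^ a * y ^ a"
    by (rule prod_gcd_lcm_nat[of "x ^ a" "y ^ a", symmetric])
  also have "\<dots> = (x * y) ^ a" by (rule power_mult_distrib[symmetric])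
  also have "\<dots> = (gcd x y * lcm x y) ^ a" by (simp only: prod_gcd_lcm_nat[of x y])
  also have "\<dots> = gcd x y ^ a * lcm x y ^ a" by (rule power_mult_distrib)
  finally have "gcd x y ^ a * lcm (x ^ a) (y ^ a) = gcd x y ^ a * lcm x y ^ a"
    by (simp only: gcd_exp)
  thus ?thesis using False by force
qed

lemma Lcm_pow_nat: "finite A \<Longrightarrow> Lcm ((\<lambda>x. x ^ a) ` A) = (Lcm A) ^ a" for A :: "nat set"
  by (induction A rule: finite_induct) (auto simp: lcm_pow_nat)

lemma all_pow_dvd_iff:
  fixes A :: "nat set" assumes "finite A"
  shows "(\<forall>x\<in>A. x ^ a dvd j) \<longleftrightarrow> (Lcm A) ^ a dvd j"
proof
  assume "\<forall>x\<in>A. x ^ a dvd j"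
  hence "Lcm ((\<lambda>x. x ^ a) ` A) dvd j" by (auto intro: Lcm_least)
  thus "(Lcm A) ^ a dvd j" by (simp add: Lcm_pow_nat[OF assms])
next
  assume h: "(Lcm A) ^ a dvd j"
  show "\<forall>x\<in>A. x ^ a dvd j"
  proof
    fix x assume "x \<in> A"
    hence "x ^ a dvd (Lcm A) ^ a" by (intro dvd_power_same dvd_Lcm)
    thus "x ^ a dvd j" using h by (rule dvd_trans)
  qed
qed

lemma P_expand:
  assumes k: "\<And>i. i \<in> {1..n} \<Longrightarrow> k i \<ge> 1"
  shows "real (Pfun n a k j) = (\<Sum>d\<in>divtuples n k. (\<Prod>i=1..n. real (totient (d i))) *
            (if Lcm (d ` {1..n}) ^ a dvd j then 1 else 0))"
proof -
  have fin: "finite {d. d dvd k i}" if "i \<in> {1..n}" for i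
    using k[OF that] by (intro finite_divisors_nat) auto
  have "real (Pfun n a k j) = (\<Prod>i=1..n. \<Sum>d\<in>{d. d dvd k i}. real (totient d) * (if d ^ a dvd j then 1 else 0))"
    unfolding Pfun_def of_nat_prod
  proof (intro prod.cong refl)
    fix i assume i: "i \<in> {1..n}"
    have "{d. d dvd k i \<and> d ^ a dvd j} = {d \<in> {d. d dvd k i}. d ^ a dvd j}" by auto
    hence "(\<Sum>d\<in>{d. d dvd k i \<and> d ^ a dvd j}. real (totient d)) =
           (\<Sum>d\<in>{d. d dvd k i}. if d ^ a dvd j then real (totient d) else 0)"
      using sum.inter_filter[OF fin[OF i], of "\<lambda>d. real (totient d)" "\<lambda>d. d ^ a dvd j"] by simp
    thus "real (\<Sum>d\<in>{d. d dvd k i \<and> d ^ a dvd j}. totient d) =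
          (\<Sum>d\<in>{d. d dvd k i}. real (totient d) * (if d ^ a dvd j then 1 else 0))"
      by (simp add: of_nat_sum if_distrib cong: if_cong)
  qed
  also have "\<dots> = (\<Sum>d\<in>divtuples n k. \<Prod>i=1..n. real (totient (d i)) * (if d i ^ a dvd j then 1 else 0))"
    unfolding divtuples_def by (rule prod_sum_PiE) (use fin in auto)
  also have "\<dots> = (\<Sum>d\<in>divtuples n k. (\<Prod>i=1..n. real (totient (d i))) *
            (if Lcm (d ` {1..n}) ^ a dvd j then 1 else 0))"
  proof (intro sum.cong refl)
    fix d
    have "(\<Prod>i=1..n. real (totient (d i)) * (if d i ^ a dvd j then 1 else 0)) =
          (\<Prod>i=1..n. real (totient (d i))) * (\<Prod>i=1..n. (if d i ^ a dvd j then 1 else 0))"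
      by (rule prod.distrib)
    also have "(\<Prod>i=1..n. (if d i ^ a dvd j then 1 else 0::real)) = (if (\<forall>i\<in>{1..n}. d i ^ a dvd j) then 1 else 0)"
      by (cases "\<forall>i\<in>{1..n}. d i ^ a dvd j") (auto simp: prod_zero_iff intro!: prod.neutral)
    also have "(\<forall>i\<in>{1..n}. d i ^ a dvd j) \<longleftrightarrow> (\<forall>x\<in>d ` {1..n}. x ^ a dvd j)" by auto
    also have "\<dots> \<longleftrightarrow> Lcm (d ` {1..n}) ^ a dvd j" by (rule all_pow_dvd_iff) auto
    finally show "(\<Prod>i=1..n. real (totient (d i)) * (if d i ^ a dvd j then 1 else 0)) =
          (\<Prod>i=1..n. real (totient (d i))) * (if Lcm (d ` {1..n}) ^ a dvd j then 1 else 0)" .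
  qed
  finally show ?thesis .
qed

lemma sum_phi_D:
  assumes k: "\<And>i. i \<in> {1..n} \<Longrightarrow> k i \<ge> 1"
  shows "(\<Sum>d\<in>divtuples n k. \<Prod>i=1..n. real (totient (d i))) = real (\<Prod>i=1..n. k i)"
proof -
  have fin: "finite {d. d dvd k i}" if "i \<in> {1..n}" for i
    using k[OF that] by (intro finite_divisors_nat) auto
  have "(\<Sum>d\<in>divtuples n k. \<Prod>i=1..n. real (totient (d i))) = (\<Prod>i=1..n. \<Sum>e\<in>{d. d dvd k i}. real (totient e))"
    unfolding divtuples_def by (rule prod_sum_PiE[symmetric]) (use fin in auto)
  also have "\<dots> = (\<Prod>i=1..n. real (k i))"
    by (intro prod.cong refl) (simp flip: of_nat_sum add: totient_divisor_sum)
  finally show ?thesis by simp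
qed

lemma sum_multiples:
  fixes g :: "nat \<Rightarrow> 'b::comm_monoid_add"
  assumes "finite A" "m > 0" "{j\<in>A. m dvd j} = (\<lambda>l. m * l) ` B"
  shows "(\<Sum>j\<in>A. if m dvd j then g j else 0) = (\<Sum>l\<in>B. g (m * l))"
proof -
  have "(\<Sum>j\<in>A. if m dvd j then g j else 0) = (\<Sum>j\<in>{j\<in>A. m dvd j}. g j)"
    by (rule sum.inter_filter[OF assms(1), symmetric])
  also have "\<dots> = (\<Sum>l\<in>B. g (m * l))"
    unfolding assms(3) using assms(2) by (subst sum.reindex) (auto simp: inj_on_def)
  finally show ?thesis .
qed

lemma mult_set1: "m > 0 \<Longrightarrow> {j\<in>{1..m*q}. m dvd j} = (\<lambda>l. m * l) ` {1..q}" for m q :: nat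
  by (auto elim!: dvdE simp: image_iff)

lemma mult_set0: "m > 0 \<Longrightarrow> {j\<in>{0..<m*q}. m dvd j} = (\<lambda>l. m * l) ` {..<q}" for m q :: nat
  by (auto elim!: dvdE simp: image_iff)


lemma powi_aux:
  assumes "Mr > 0" "Lr > (0::real)"
  shows "Lr ^ a * (1 / Lr ^ a) ^ mm = Mr powi (int a * (int mm - 1)) / (Mr * Lr) powi (int a * (int mm - 1))"
proof (cases mm)
  case 0
  have "int a * (int mm - 1) = - int a" by (simp add: 0)
  hence "Mr powi (int a * (int mm - 1)) / (Mr * Lr) powi (int a * (int mm - 1)) = inverse (Mr ^ a) / inverse ((Mr * Lr) ^ a)"
    by (simp only: power_int_minus power_int_of_nat)
  also have "\<dots> = Lr ^ a" using assms by (simp add: power_mult_distrib field_simps)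
  finally show ?thesis by (simp add: 0)
next
  case (Suc t)
  have "int a * (int mm - 1) = int (a * t)" by (simp add: Suc)
  hence "Mr powi (int a * (int mm - 1)) / (Mr * Lr) powi (int a * (int mm - 1)) = Mr ^ (a * t) / (Mr * Lr) ^ (a * t)"
    by (simp only: power_int_of_nat)
  also have "\<dots> = 1 / Lr ^ (a * t)" using assms by (simp add: power_mult_distrib field_simps)
  also have "\<dots> = Lr ^ a * (1 / Lr ^ a) ^ mm" using assms
    by (simp add: Suc power_mult power_divide field_simps)
  finally show ?thesis ..
qed

theorem mainTheorem13:
  fixes n a :: nat and k :: "nat \<Rightarrow> nat"
  assumes "n \<ge> 1" and "a \<ge> 2" and "\<And>i. i \<in> {1..n} \<Longrightarrow> k i \<ge> 1"
  defines "K \<equiv> Lcm (k ` {1..n})"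
  defines "M \<equiv> (\<lambda>d::nat \<Rightarrow> nat. Lcm (d ` {1..n}))"
  defines "L \<equiv> (\<lambda>d::nat \<Rightarrow> nat. K div M d)"
  defines "P \<equiv> Pfun n a k"
  defines "D \<equiv> divtuples n k"
  shows
    "((\<Sum>j=1..K^a. ln (Gamma (real j / real (K^a))) * real (P j)) =
       real (K^a) / 2 * ln (2 * pi) * (\<Sum>d\<in>D. (\<Prod>i=1..n. real (totient (d i))) / real (M d) ^ a)
       - real (\<Prod>i=1..n. k i) / 2 * ln (2 * pi * real (K^a))
       + real a / 2 * (\<Sum>d\<in>D. ln (real (M d)) * (\<Prod>i=1..n. real (totient (d i))))) \<and>
    ((\<Sum>j=0..K^a. real (K^a choose j) * real (P j)) =
       2 ^ (K^a) * (\<Sum>d\<in>D. (\<Prod>i=1..n. real (totient (d i))) / real (M d) ^ a *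
          (\<Sum>l=1..M d ^ a. (-1) ^ (l * L d ^ a) * cos (pi * real l / real (M d ^ a)) ^ (K^a)))) \<and>
    (\<forall>m::nat. (\<Sum>j=0..<K^a. bernpoly m (real j / real (K^a)) * real (P j)) =
       bernoulli m / real K powi (int a * (int m - 1)) *
       (\<Sum>d\<in>D. real (M d) powi (int a * (int m - 1)) * (\<Prod>i=1..n. real (totient (d i))))) \<and>
    ((\<Sum>j=0..<K^a. bernpoly 1 (real j / real (K^a)) * real (P j)) = - real (\<Prod>i=1..n. k i) / 2)"
proof -
  note kpos = assms(3)
  define N where "N = K ^ a"
  define ph where "ph = (\<lambda>d::nat \<Rightarrow> nat. \<Prod>i=1..n. real (totient (d i)))"
  have finD: "finite D"
    unfolding D_def divtuples_def
  proof (intro finite_PiE)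
    fix i assume "i \<in> {1..n}"
    hence "k i \<ge> 1" by (rule kpos)
    thus "finite {d. d dvd k i}" by (intro finite_divisors_nat) auto
  qed simp
  have Kpos: "K > 0"
  proof -
    have "0 \<notin> k ` {1..n}" using kpos by force
    hence "K \<noteq> 0" unfolding K_def by (subst Lcm_0_iff) auto
    thus ?thesis by simp
  qed
  have dD: "d i dvd k i" if "d \<in> D" "i \<in> {1..n}" for d i
    using that unfolding D_def divtuples_def by (auto simp: PiE_iff)
  have Mdvd: "M d dvd K" if "d \<in> D" for d
    unfolding M_def K_def
  proof (rule Lcm_least)
    fix x assume "x \<in> d ` {1..n}"
    then obtain i where i: "i \<in> {1..n}" "x = d i" by auto
    have "k i dvd Lcm (k ` {1..n})" using i by (intro dvd_Lcm) auto
    with dD[OF that i(1)] i show "x dvd Lcm (k ` {1..n})" by (auto intro: dvd_trans)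
  qed
  have Mpos: "M d > 0" if "d \<in> D" for d
    using Mdvd[OF that] Kpos by (auto intro: Nat.gr0I)
  have KML: "K = M d * L d" if "d \<in> D" for d
    unfolding L_def using Mdvd[OF that] by simp
  have Lpos: "L d > 0" if "d \<in> D" for d
    using KML[OF that] Kpos by (auto intro: Nat.gr0I)
  have NML: "N = M d ^ a * L d ^ a" if "d \<in> D" for d
    unfolding N_def using KML[OF that] by (simp add: power_mult_distrib)
  have Pj: "real (P j) = (\<Sum>d\<in>D. ph d * (if M d ^ a dvd j then 1 else 0))" for j
    unfolding P_def D_def M_def ph_def by (rule P_expand[OF kpos])
  have red: "(\<Sum>j\<in>J. f j * real (P j)) = (\<Sum>d\<in>D. ph d * (\<Sum>j\<in>J. if M d ^ a dvd j then f j else 0))"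
    if "finite J" for f :: "nat \<Rightarrow> real" and J
  proof -
    have "(\<Sum>j\<in>J. f j * real (P j)) = (\<Sum>j\<in>J. \<Sum>d\<in>D. ph d * (if M d ^ a dvd j then f j else 0))"
      unfolding Pj sum_distrib_left by (intro sum.cong refl) auto
    also have "\<dots> = (\<Sum>d\<in>D. \<Sum>j\<in>J. ph d * (if M d ^ a dvd j then f j else 0))"
      by (rule sum.swap)
    also have "\<dots> = (\<Sum>d\<in>D. ph d * (\<Sum>j\<in>J. if M d ^ a dvd j then f j else 0))"
      by (simp add: sum_distrib_left)
    finally show ?thesis .
  qed
  have sumph: "(\<Sum>d\<in>D. ph d) = real (\<Prod>i=1..n. k i)"
    unfolding ph_def D_def by (rule sum_phi_D[OF kpos])

  have part1: "(\<Sum>j=1..K^a. ln (Gamma (real j / real (K^a))) * real (P j)) =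
       real (K^a) / 2 * ln (2 * pi) * (\<Sum>d\<in>D. (\<Prod>i=1..n. real (totient (d i))) / real (M d) ^ a)
       - real (\<Prod>i=1..n. k i) / 2 * ln (2 * pi * real (K^a))
       + real a / 2 * (\<Sum>d\<in>D. ln (real (M d)) * (\<Prod>i=1..n. real (totient (d i))))"
  proof -
    have "(\<Sum>j=1..K^a. ln (Gamma (real j / real (K^a))) * real (P j)) =
          (\<Sum>d\<in>D. ph d * ((real (L d ^ a) - 1) / 2 * ln (2 * pi) - ln (real (L d ^ a)) / 2))"
      unfolding N_def[symmetric] red[OF finite_atLeastAtMost]
    proof (intro sum.cong refl)
      fix d assume d: "d \<in> D"
      have m0: "M d ^ a > 0" using Mpos[OF d] by simp
      have "(\<Sum>j\<in>{1..N}. if M d ^ a dvd j then ln (Gamma (real j / real N)) else 0) =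
            (\<Sum>l\<in>{1..L d ^ a}. ln (Gamma (real (M d ^ a * l) / real N)))"
        unfolding NML[OF d] by (rule sum_multiples[OF _ m0 mult_set1[OF m0]]) simp
      also have "\<dots> = (\<Sum>l=1..L d ^ a. ln (Gamma (real l / real (L d ^ a))))"
        using m0 Mpos[OF d] by (intro sum.cong refl) (simp add: NML[OF d])
      also have "\<dots> = (real (L d ^ a) - 1) / 2 * ln (2 * pi) - ln (real (L d ^ a)) / 2"
        by (rule ln_Gamma_mult) (use Lpos[OF d] in simp)
      finally show "ph d * (\<Sum>j\<in>{1..N}. if M d ^ a dvd j then ln (Gamma (real j / real N)) else 0) =
            ph d * ((real (L d ^ a) - 1) / 2 * ln (2 * pi) - ln (real (L d ^ a)) / 2)" by simp
    qed
    also have "\<dots> = (\<Sum>d\<in>D. real N / 2 * ln (2 * pi) * (ph d / real (M d) ^ a)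
         - ph d / 2 * ln (2 * pi * real N) + real a / 2 * (ln (real (M d)) * ph d))"
    proof (intro sum.cong refl)
      fix d assume d: "d \<in> D"
      define Mr where "Mr = real (M d)"
      define Lr where "Lr = real (L d)"
      have Mr: "Mr > 0" using Mpos[OF d] by (simp add: Mr_def)
      have Lr: "Lr > 0" using Lpos[OF d] by (simp add: Lr_def)
      have rN: "real N = Mr ^ a * Lr ^ a" by (simp add: NML[OF d] Mr_def Lr_def)
      have l1: "ln (2 * pi * real N) = ln (2 * pi) + real a * ln Mr + real a * ln Lr"
        using Mr Lr by (simp add: rN ln_mult ln_realpow)
      have l2: "ln (real (L d ^ a)) = real a * ln Lr" by (simp add: Lr_def ln_realpow)
      have l3: "real N / Mr ^ a = Lr ^ a" using Mr by (simp add: rN)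
      have "real N / 2 * ln (2 * pi) * (ph d / real (M d) ^ a) = ph d * (Lr ^ a / 2 * ln (2 * pi))"
      proof -
        have "real N / 2 * ln (2 * pi) * (ph d / real (M d) ^ a) = ph d * ((real N / Mr ^ a) / 2 * ln (2 * pi))"
          unfolding Mr_def by (simp add: field_simps)
        thus ?thesis unfolding l3 .
      qed
      thus "ph d * ((real (L d ^ a) - 1) / 2 * ln (2 * pi) - ln (real (L d ^ a)) / 2) =
         real N / 2 * ln (2 * pi) * (ph d / real (M d) ^ a)
         - ph d / 2 * ln (2 * pi * real N) + real a / 2 * (ln (real (M d)) * ph d)"
        unfolding l1 l2 by (simp add: Lr_def Mr_def[symmetric] field_simps)
    qed
    also have "\<dots> = real N / 2 * ln (2 * pi) * (\<Sum>d\<in>D. ph d / real (M d) ^ a)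
         - (\<Sum>d\<in>D. ph d) / 2 * ln (2 * pi * real N) + real a / 2 * (\<Sum>d\<in>D. ln (real (M d)) * ph d)"
      by (simp only: sum.distrib sum_subtractf sum_distrib_left sum_distrib_right sum_divide_distrib)
    finally have X: "(\<Sum>j=1..K^a. ln (Gamma (real j / real (K^a))) * real (P j)) =
      real N / 2 * ln (2 * pi) * (\<Sum>d\<in>D. ph d / real (M d) ^ a)
         - (\<Sum>d\<in>D. ph d) / 2 * ln (2 * pi * real N) + real a / 2 * (\<Sum>d\<in>D. ln (real (M d)) * ph d)" .
    show ?thesis unfolding sumph[unfolded ph_def, symmetric] using X unfolding N_def ph_def .
  qed

  have part2: "(\<Sum>j=0..K^a. real (K^a choose j) * real (P j)) =
       2 ^ (K^a) * (\<Sum>d\<in>D. (\<Prod>i=1..n. real (totient (d i))) / real (M d) ^ a *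
          (\<Sum>l=1..M d ^ a. (-1) ^ (l * L d ^ a) * cos (pi * real l / real (M d ^ a)) ^ (K^a)))"
  proof -
    have "(\<Sum>j=0..K^a. real (K^a choose j) * real (P j)) =
       (\<Sum>d\<in>D. 2 ^ N * (ph d / real (M d) ^ a *
          (\<Sum>l=1..M d ^ a. (-1) ^ (l * L d ^ a) * cos (pi * real l / real (M d ^ a)) ^ N)))"
      unfolding N_def[symmetric] red[OF finite_atLeastAtMost]
    proof (intro sum.cong refl)
      fix d assume d: "d \<in> D"
      have m1: "M d ^ a \<ge> 1" using Mpos[OF d] by simp
      have "(\<Sum>j\<in>{0..N}. if M d ^ a dvd j then real (N choose j) else 0) =
            (\<Sum>j=0..N. real (N choose j) * (if M d ^ a dvd j then 1 else 0))"
        by (intro sum.cong refl) simp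
      also have "\<dots> = 2 ^ N / real (M d ^ a) *
          (\<Sum>l=1..M d ^ a. (-1) ^ (l * L d ^ a) * cos (pi * real l / real (M d ^ a)) ^ N)"
        by (rule binom_filter[OF m1 NML[OF d]])
      finally show "ph d * (\<Sum>j\<in>{0..N}. if M d ^ a dvd j then real (N choose j) else 0) =
          2 ^ N * (ph d / real (M d) ^ a *
          (\<Sum>l=1..M d ^ a. (-1) ^ (l * L d ^ a) * cos (pi * real l / real (M d ^ a)) ^ N))"
        by simp
    qed
    thus ?thesis unfolding N_def ph_def by (simp only: sum_distrib_left)
  qed

  have part3: "(\<Sum>j=0..<K^a. bernpoly m (real j / real (K^a)) * real (P j)) =
       bernoulli m / real K powi (int a * (int m - 1)) *
       (\<Sum>d\<in>D. real (M d) powi (int a * (int m - 1)) * (\<Prod>i=1..n. real (totient (d i))))" for m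
  proof -
    have "(\<Sum>j=0..<K^a. bernpoly m (real j / real (K^a)) * real (P j)) =
          (\<Sum>d\<in>D. bernoulli m / real K powi (int a * (int m - 1)) *
               (real (M d) powi (int a * (int m - 1)) * ph d))"
      unfolding N_def[symmetric] red[OF finite_atLeastLessThan]
    proof (intro sum.cong refl)
      fix d assume d: "d \<in> D"
      have m0: "M d ^ a > 0" using Mpos[OF d] by simp
      have q0: "L d ^ a > 0" using Lpos[OF d] by simp
      have "(\<Sum>j\<in>{0..<N}. if M d ^ a dvd j then bernpoly m (real j / real N) else 0) =
            (\<Sum>l\<in>{..<L d ^ a}. bernpoly m (real (M d ^ a * l) / real N))"
        unfolding NML[OF d] by (rule sum_multiples[OF _ m0 mult_set0[OF m0]]) simp
      also have "\<dots> = (\<Sum>l<L d ^ a. bernpoly m (real l / real (L d ^ a)))"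
        using m0 Mpos[OF d] by (intro sum.cong refl) (simp add: NML[OF d])
      also have "\<dots> = real (L d ^ a) * (1 / real (L d ^ a)) ^ m * bernoulli m"
        by (rule bernpoly_mult[OF q0])
      also have "real (L d ^ a) * (1 / real (L d ^ a)) ^ m =
            real (M d) powi (int a * (int m - 1)) / (real (M d) * real (L d)) powi (int a * (int m - 1))"
        unfolding of_nat_power by (rule powi_aux) (use Mpos[OF d] Lpos[OF d] in simp_all)
      also have "real (M d) * real (L d) = real K" using KML[OF d] by simp
      finally show "ph d * (\<Sum>j\<in>{0..<N}. if M d ^ a dvd j then bernpoly m (real j / real N) else 0) =
          bernoulli m / real K powi (int a * (int m - 1)) * (real (M d) powi (int a * (int m - 1)) * ph d)"
        by simp
    qed
    thus ?thesis unfolding ph_def by (simp only: sum_distrib_left)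
  qed

  have part4: "(\<Sum>j=0..<K^a. bernpoly 1 (real j / real (K^a)) * real (P j)) = - real (\<Prod>i=1..n. k i) / 2"
    using part3[of 1] sumph bernoulli_1 unfolding ph_def by simp

  show ?thesis using part1 part2 part3 part4 by blast
qed

end
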